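(* Let $\underline m=(m_i)_{i\ge1}$ be a sequence of positive integers, $M_j=m_1+\dots+m_j$ ($M_0=0$), let $n\ge1$, and let $\psi:\mathbb Z_p\to\mathbb C_p^\times$ be an additive character of conductor $p^{M_{n-1}+k}$ with $1\le k\le m_n$ (so $\psi$ may be viewed as a character of $\mathbb Z/p^{M_n}$). Consider the function $F:\prod_{i=1}^n\mathbb Z/p^{m_i}\to\mathbb C_p^\times$, $F(a)=\psi(d_{n,\underline m}(a))$. For $\chi=(\chi_1,\ldots,\chi_n)\in\prod_{i=1}^n\widehat{\mathbb Z/p^{m_i}}$, the Fourier coefficient $\langle F,\chi\rangle$ is zero unless $\chi_n(a)=\psi(p^{M_{n-1}}a)$ for all $a\in\mathbb Z/p^{m_n}$, in which case $$\langle F,\chi\rangle=p^{m_n}\prod_{i=1}^{n-1}\frac{\psi(p^{M_i})-1}{\psi(p^{M_{i-1}})\overline{\chi_i}(1)-1}.$$ In particular all nonzero Fourier coefficients of $F$ have the same $p$-adic valuation.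
   Context: Digit map: for $a\in\mathbb Z/p^{m}$ let $\tilde a\in\{0,\ldots,p^{m}-1\}$ be its representative. The bijection of sets $d_{n,\underline m}:\prod_{i=1}^n\mathbb Z/p^{m_i}\to\mathbb Z/p^{M_n}$ is $(a_i)_i\mapsto\sum_{i=1}^n\tilde a_ip^{M_{i-1}}\bmod p^{M_n}$. For a finite abelian group $G$, $\widehat G$ is the group of characters $G\to\mathbb C_p^\times$, and for $f:G\to\mathbb C_p$ and $\chi\in\widehat G$, $\langle f,\chi\rangle=\sum_{g\in G}f(g)\overline{\chi}(g)$, where $\overline\chi=\chi^{-1}$. *)

theory Defs
  imports "HOL-Computational_Algebra.Primes" "HOL-Library.FuncSet"
begin

definition Msum :: "(nat \<Rightarrow> nat) \<Rightarrow> nat \<Rightarrow> nat" where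
  "Msum m j = (\<Sum>i=1..j. m i)"

text \<open>Z/N is modelled by the representatives {0..<N}; a character of Z/N with values
  in a field is a function on these representatives that is a homomorphism from
  (Z/N,+) to the multiplicative group.\<close>
definition is_char_mod :: "nat \<Rightarrow> (nat \<Rightarrow> 'a::field) \<Rightarrow> bool" where
  "is_char_mod N \<chi> \<longleftrightarrow> \<chi> 0 = 1 \<and> (\<forall>a<N. \<forall>b<N. \<chi> ((a + b) mod N) = \<chi> a * \<chi> b)"

definition has_conductor :: "nat \<Rightarrow> nat \<Rightarrow> (nat \<Rightarrow> 'a::field) \<Rightarrow> nat \<Rightarrow> bool" where
  "has_conductor p N \<psi> c \<longleftrightarrow> c \<le> N \<and>
     (\<forall>x<p^N. \<psi> ((p^c * x) mod p^N) = 1) \<and>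
     (0 < c \<longrightarrow> (\<exists>x<p^N. \<psi> ((p^(c-1) * x) mod p^N) \<noteq> 1))"

definition digit_map :: "nat \<Rightarrow> (nat \<Rightarrow> nat) \<Rightarrow> nat \<Rightarrow> (nat \<Rightarrow> nat) \<Rightarrow> nat" where
  "digit_map p m n a = (\<Sum>i=1..n. a i * p ^ Msum m (i - 1)) mod p ^ Msum m n"

text \<open>Fourier coefficient <F, chi> = sum_g F(g) * conj(chi)(g), where the character of the
  product group is chi(a) = prod_i chi_i(a_i) and conj chi = chi^{-1}.\<close>
definition fourier_coeff ::
  "nat \<Rightarrow> (nat \<Rightarrow> nat) \<Rightarrow> nat \<Rightarrow> ((nat \<Rightarrow> nat) \<Rightarrow> 'a::field) \<Rightarrow> (nat \<Rightarrow> nat \<Rightarrow> 'a) \<Rightarrow> 'a" where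
  "fourier_coeff p m n F \<chi> =
     (\<Sum>a\<in>(\<Pi>\<^sub>E i\<in>{1..n}. {..<p ^ m i}). F a * inverse (\<Prod>i=1..n. \<chi> i (a i)))"

end

theory Submission
  imports Defs
begin

lemma char_pow:
  assumes "is_char_mod N (\<chi>::nat \<Rightarrow> 'a::field)" "0 < N"
  shows "\<chi> (x mod N) = \<chi> (1 mod N) ^ x"
proof (induction x)
  case 0
  then show ?case using assms by (simp add: is_char_mod_def)
next
  case (Suc x)
  have "\<chi> (Suc x mod N) = \<chi> ((x mod N + 1 mod N) mod N)"
    by (metis Suc_eq_plus1 mod_add_eq)
  also have "\<dots> = \<chi> (x mod N) * \<chi> (1 mod N)"
    using assms unfolding is_char_mod_def by (meson mod_less_divisor)
  finally show ?case using Suc by simp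
qed

lemma Msum_Suc: "Msum m (Suc i) = Msum m i + m (Suc i)"
  by (simp add: Msum_def)

lemma Msum_mono: "i \<le> j \<Longrightarrow> Msum m i \<le> Msum m j"
  unfolding Msum_def by (intro sum_mono2) auto

theorem lemma3p2:
  fixes p n k :: nat and m :: "nat \<Rightarrow> nat"
    and \<psi> :: "nat \<Rightarrow> 'a::field_char_0"
    and \<chi> :: "nat \<Rightarrow> nat \<Rightarrow> 'a"
  assumes "prime p"
    and "\<And>i. 1 \<le> i \<Longrightarrow> 0 < m i"
    and "1 \<le> n"
    and "1 \<le> k" and "k \<le> m n"
    and "is_char_mod (p ^ Msum m n) \<psi>"
    and "has_conductor p (Msum m n) \<psi> (Msum m (n - 1) + k)"
    and "\<And>i. i \<in> {1..n} \<Longrightarrow> is_char_mod (p ^ m i) (\<chi> i)"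
  shows "fourier_coeff p m n (\<lambda>a. \<psi> (digit_map p m n a)) \<chi> =
    (if (\<forall>a<p ^ m n. \<chi> n a = \<psi> ((p ^ Msum m (n - 1) * a) mod p ^ Msum m n))
     then of_nat (p ^ m n) *
        (\<Prod>i=1..n-1. (\<psi> (p ^ Msum m i) - 1) /
                       (\<psi> (p ^ Msum m (i - 1)) * inverse (\<chi> i 1) - 1))
     else 0)"
proof -
  define N where "N = Msum m n"
  define w where "w = \<psi> 1"
  define c where "c = (\<lambda>i. \<chi> i 1)"
  define z where "z = (\<lambda>i. w ^ (p ^ Msum m (i - 1)) * inverse (c i))"
  have p2: "p \<ge> 2" using assms(1) prime_ge_2_nat by blast
  have n_eq: "n = Suc (n - 1)" using assms(3) by simp
  have MN: "Msum m n = Msum m (n - 1) + m n"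
    using Msum_Suc[of m "n - 1"] n_eq by simp
  have mn: "m n > 0" using assms(2,3) by simp
  have Npos: "N > 0" using MN mn N_def by simp
  have pN: "p ^ N > 1" using one_less_power[of p N] Npos p2 by simp
  have psi: "\<psi> (x mod p ^ N) = w ^ x" for x
    using char_pow[OF assms(6)[folded N_def], of x] mod_less[OF pN] pN w_def by (metis less_trans zero_less_one)
  have Pi1: "p ^ m i > 1" if "i \<ge> 1" for i
    using one_less_power[of p "m i"] assms(2)[OF that] p2 by simp
  have chi: "\<chi> i (x mod p ^ m i) = c i ^ x" if "i \<in> {1..n}" for i x
    using char_pow[OF assms(8)[OF that], of x] mod_less[OF Pi1[of i]] Pi1[of i] that c_def by (metis atLeastAtMost_iff less_trans zero_less_one)
  have cP: "c i ^ (p ^ m i) = 1" if "i \<in> {1..n}" for i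
    using chi[OF that, of "p ^ m i"] assms(8)[OF that] by (simp add: is_char_mod_def)
  have cnz: "c i \<noteq> 0" if "i \<in> {1..n}" for i
  proof
    assume "c i = 0"
    moreover have "p ^ m i \<noteq> 0" using p2 by simp
    ultimately have "c i ^ p ^ m i = 0" by simp
    then show False using cP[OF that] by simp
  qed
  have term_eq: "\<psi> (digit_map p m n a) * inverse (\<Prod>i=1..n. \<chi> i (a i)) = (\<Prod>i=1..n. z i ^ a i)"
    if a: "a \<in> (\<Pi>\<^sub>E i\<in>{1..n}. {..<p ^ m i})" for a
  proof -
    have "\<psi> (digit_map p m n a) = w ^ (\<Sum>i=1..n. a i * p ^ Msum m (i - 1))"
      unfolding digit_map_def N_def[symmetric] psi ..
    also have "\<dots> = (\<Prod>i=1..n. (w ^ p ^ Msum m (i - 1)) ^ a i)"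
      by (simp add: power_sum flip: power_mult) (simp add: mult.commute)
    finally have 1: "\<psi> (digit_map p m n a) = (\<Prod>i=1..n. (w ^ p ^ Msum m (i - 1)) ^ a i)" .
    have "(\<Prod>i=1..n. \<chi> i (a i)) = (\<Prod>i=1..n. c i ^ a i)"
    proof (rule prod.cong)
      fix i assume i: "i \<in> {1..n}"
      then have "a i < p ^ m i" using a by auto
      then show "\<chi> i (a i) = c i ^ a i" using chi[OF i, of "a i"] by simp
    qed simp
    then have 2: "inverse (\<Prod>i=1..n. \<chi> i (a i)) = (\<Prod>i=1..n. inverse (c i) ^ a i)"
      by (simp add: prod_inversef[symmetric] comp_def power_inverse)
    show ?thesis unfolding 1 2 z_def
      by (simp add: prod.distrib[symmetric] power_mult_distrib)
  qed
  have F: "fourier_coeff p m n (\<lambda>a. \<psi> (digit_map p m n a)) \<chi> =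
       (\<Prod>i=1..n. \<Sum>j<p ^ m i. z i ^ j)"
    unfolding fourier_coeff_def
    by (subst prod_sum_PiE) (simp, simp, rule sum.cong[OF refl], rule term_eq)
  have psi': "\<psi> x = w ^ x" if "x < p ^ N" for x
    using psi[of x] that by simp
  have Mlt: "Msum m i < N" if "i \<le> n - 1" for i
    using Msum_mono[OF that, of m] MN mn N_def by simp
  have zpow: "z i ^ (p ^ m i) = w ^ (p ^ Msum m i)" if i: "i \<in> {1..n}" for i
  proof -
    have "Msum m i = Msum m (i - 1) + m i" using Msum_Suc[of m "i - 1"] i by simp
    then have "p ^ Msum m i = p ^ Msum m (i - 1) * p ^ m i" by (simp add: power_add)
    then have "w ^ (p ^ Msum m i) = (w ^ p ^ Msum m (i - 1)) ^ (p ^ m i)"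
      by (simp add: power_mult)
    moreover have "inverse (c i) ^ (p ^ m i) = 1"
      by (metis power_inverse cP[OF i] inverse_1)
    ultimately show ?thesis unfolding z_def
      by (simp only: power_mult_distrib) simp
  qed
  have Slt: "(\<Sum>j<p ^ m i. z i ^ j) = (\<psi> (p ^ Msum m i) - 1) /
                       (\<psi> (p ^ Msum m (i - 1)) * inverse (\<chi> i 1) - 1)"
    if i: "i \<in> {1..n-1}" for i
  proof -
    have i': "i \<in> {1..n}" using i by auto
    have z1: "z i \<noteq> 1"
    proof
      assume "z i = 1"
      then have wM: "w ^ (p ^ Msum m i) = 1" using zpow[OF i'] by simp
      obtain x where "\<psi> ((p ^ (Msum m (n - 1) + k - 1) * x) mod p ^ N) \<noteq> 1"
        using assms(7) assms(4) unfolding has_conductor_def N_def by auto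
      then have ne: "w ^ (p ^ (Msum m (n - 1) + k - 1) * x) \<noteq> 1" by (simp add: psi)
      have "Msum m i \<le> Msum m (n - 1)" using i by (intro Msum_mono) auto
      then have "Msum m (n - 1) + k - 1 = Msum m i + (Msum m (n - 1) + k - 1 - Msum m i)"
        using assms(4) by simp
      then have "p ^ (Msum m (n - 1) + k - 1) * x = p ^ Msum m i * (p ^ (Msum m (n - 1) + k - 1 - Msum m i) * x)"
        by (metis power_add mult.assoc)
      then have "w ^ (p ^ (Msum m (n - 1) + k - 1) * x) = (w ^ (p ^ Msum m i)) ^ (p ^ (Msum m (n - 1) + k - 1 - Msum m i) * x)"
        by (metis power_mult)
      then have "w ^ (p ^ (Msum m (n - 1) + k - 1) * x) = 1"
        by (simp only: wM power_one)
      then show False using ne by simp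
    qed
    have e1: "\<psi> (p ^ Msum m i) = w ^ (p ^ Msum m i)"
      using Mlt[of i] i p2 by (intro psi') (auto intro: power_strict_increasing)
    have e2: "\<psi> (p ^ Msum m (i - 1)) = w ^ (p ^ Msum m (i - 1))"
      using Mlt[of "i - 1"] i p2 by (intro psi') (auto intro: power_strict_increasing)
    show ?thesis
      using geometric_sum[OF z1, of "p ^ m i"] zpow[OF i'] e1 e2
      by (simp add: z_def c_def)
  qed
  have zn: "z n ^ (p ^ m n) = 1"
    using zpow[of n] assms(3) psi[of "p ^ N"] assms(6) N_def
    by (simp add: is_char_mod_def)
  have Sn: "(\<Sum>j<p ^ m n. z n ^ j) = (if z n = 1 then of_nat (p ^ m n) else 0)"
    using geometric_sum[of "z n" "p ^ m n"] zn by simp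
  have nin: "n \<in> {1..n}" using assms(3) by simp
  have cond: "(\<forall>a<p ^ m n. \<chi> n a = \<psi> ((p ^ Msum m (n - 1) * a) mod p ^ Msum m n)) \<longleftrightarrow> z n = 1"
  proof
    assume h: "\<forall>a<p ^ m n. \<chi> n a = \<psi> ((p ^ Msum m (n - 1) * a) mod p ^ Msum m n)"
    have "c n = w ^ (p ^ Msum m (n - 1))"
      using h[rule_format, of 1] Pi1[of n] assms(3) psi[of "p ^ Msum m (n - 1)"]
      by (simp add: c_def N_def)
    then show "z n = 1" using cnz[OF nin] by (simp add: z_def)
  next
    assume h: "z n = 1"
    then have cw: "w ^ (p ^ Msum m (n - 1)) = c n" using cnz[OF nin]
      by (simp add: z_def field_simps)
    show "\<forall>a<p ^ m n. \<chi> n a = \<psi> ((p ^ Msum m (n - 1) * a) mod p ^ Msum m n)"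
    proof (intro allI impI)
      fix a assume a: "a < p ^ m n"
      have "\<chi> n a = c n ^ a" using chi[OF nin, of a] a by simp
      also have "\<dots> = \<psi> ((p ^ Msum m (n - 1) * a) mod p ^ Msum m n)"
        using psi[of "p ^ Msum m (n - 1) * a"] cw by (simp add: N_def power_mult)
      finally show "\<chi> n a = \<psi> ((p ^ Msum m (n - 1) * a) mod p ^ Msum m n)" .
    qed
  qed
  have "(\<Prod>i=1..n. \<Sum>j<p ^ m i. z i ^ j) =
        (\<Prod>i=1..n-1. \<Sum>j<p ^ m i. z i ^ j) * (\<Sum>j<p ^ m n. z n ^ j)"
  proof -
    have "{1..n} = insert n {1..n-1}" using assms(3) by auto
    moreover have "n \<notin> {1..n-1}" using assms(3) by auto
    ultimately show ?thesis by (simp add: prod.insert mult.commute)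
  qed
  also have "(\<Prod>i=1..n-1. \<Sum>j<p ^ m i. z i ^ j) = (\<Prod>i=1..n-1. (\<psi> (p ^ Msum m i) - 1) /
                       (\<psi> (p ^ Msum m (i - 1)) * inverse (\<chi> i 1) - 1))"
    by (rule prod.cong[OF refl Slt])
  finally show ?thesis unfolding F Sn cond by (simp add: mult.commute)
qed

end
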